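(* Consider the ship dynamics $$M\dot\nu(t) + D(\nu(t))\nu(t) + C(\nu(t))\nu(t) = \tau(t) + \tau_d(t), \qquad \nu=[u,v,r]^\top\in\mathbb{R}^3,$$ with $M$, $D$, $C$, $\kappa_{ij}$, $\sigma$, $\Gamma=\mathrm{diag}(\Gamma_1,\Gamma_2,\Gamma_3)$ and $T$ as described in the context, and assume $\kappa_{23}\kappa_{32}<\kappa_{22}\kappa_{33}$ (so $\sigma>0$) and $\Gamma_1,\Gamma_2,\Gamma_3>0$. Run the disturbance observer $$\hat\tau_d(t) = \zeta(t) + T\nu(t),\qquad \dot\zeta(t) = -T M^{-1}\big(\tau(t) + \hat\tau_d(t) - D(\nu(t))\nu(t) - C(\nu(t))\nu(t)\big),$$ along a solution $(\nu,\zeta)$ defined for $t\ge0$. Suppose the disturbance $\tau_d$ is continuously differentiable (not necessarily constant) with $\|\dot\tau_d(t)\|\le\theta$ for all $t\ge0$, and suppose $\lambda_{\min}(\Gamma)\sigma>\tfrac12$, where $\lambda_{\min}(\Gamma)=\min(\Gamma_1,\Gamma_2,\Gamma_3)$. Then the estimation error $z(t)=\tau_d(t)-\hat\tau_d(t)$ converges exponentially into the closed ball centered at the origin with radius $$r_b=\frac{\theta}{\sqrt{2\lambda_{\min}(\Gamma)\sigma-1}};$$ precisely, with $a=2\lambda_{\min}(\Gamma)\sigma-1>0$, for all $t\ge 0$, $$\|z(t)\|^2\le e^{-at}\|z(0)\|^2 + r_b^2\big(1-e^{-at}\big).$$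
   Context: $\nu=[u,v,r]^\top$ are the surge, sway and yaw-rate velocities of the ship, $\tau(t)\in\mathbb{R}^3$ is the control input and $\tau_d(t)\in\mathbb{R}^3$ the environmental disturbance. The mass matrix is constant, symmetric, positive definite, of the form $M=\begin{bmatrix} m_{11}&0&0\\0&m_{22}&m_{23}\\0&m_{32}&m_{33}\end{bmatrix}$ with positive entries, and its inverse is written $M^{-1}=\begin{bmatrix} \kappa_{11}&0&0\\0&\kappa_{22}&\kappa_{23}\\0&\kappa_{32}&\kappa_{33}\end{bmatrix}$. $D(\nu)$ is the nonlinear damping matrix $\begin{bmatrix} d_{11}&0&0\\0&d_{22}&d_{23}\\0&d_{32}&d_{33}\end{bmatrix}$ with $d_{11}=-X_u-X_{|u|u}-X_{uuu}u^2$, $d_{22}=-Y_v-Y_{|v|v}-Y_{|r|v}|r|-Y_{vvv}v^2$, $d_{23}=-Y_r-Y_{|v|r}|v|-Y_{|r|r}|r|$, $d_{32}=-N_v-N_{|v|v}|v|-N_{|r|v}|r|$, $d_{33}=-N_r-N_{|v|r}|v|-N_{|r|r}|r|-N_{rrr}r^2$ (real hydrodynamic constants), and $C(\nu)=\begin{bmatrix}0&0&c_{13}\\0&0&c_{23}\\-c_{13}&-c_{23}&0\end{bmatrix}$ with $c_{13}=-m_{22}v-m_{23}r$, $c_{23}=m_{11}u$. Define $\sigma = 1-\frac{\kappa_{23}\kappa_{32}}{\kappa_{22}\kappa_{33}}$, adaptive gains $\Gamma_1,\Gamma_2,\Gamma_3$, $\Gamma=\mathrm{diag}(\Gamma_1,\Gamma_2,\Gamma_3)$,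 and $$T=\begin{bmatrix}\Gamma_1\frac{\sigma}{\kappa_{11}}&0&0\\ 0&\frac{\Gamma_2}{\kappa_{22}}&-\Gamma_2\frac{\kappa_{23}}{\kappa_{22}\kappa_{33}}\\ 0&-\Gamma_3\frac{\kappa_{32}}{\kappa_{22}\kappa_{33}}&\frac{\Gamma_3}{\kappa_{33}}\end{bmatrix}.$$ $\|\cdot\|$ is the Euclidean norm. *)

theory Defs
  imports "HOL-Analysis.Analysis"
begin

record hydro =
  X_u :: real  X_absu_u :: real  X_uuu :: real
  Y_v :: real  Y_absv_v :: real  Y_absr_v :: real  Y_vvv :: real
  Y_r :: real  Y_absv_r :: real  Y_absr_r :: real
  N_v :: real  N_absv_v :: real  N_absr_v :: real
  N_r :: real  N_absv_r :: real  N_absr_r :: real  N_rrr :: real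

definition mass_mat :: "real \<Rightarrow> real \<Rightarrow> real \<Rightarrow> real \<Rightarrow> real \<Rightarrow> real^3^3" where
  "mass_mat m11 m22 m23 m32 m33 =
     vector [vector [m11, 0, 0], vector [0, m22, m23], vector [0, m32, m33]]"

definition damp_mat :: "hydro \<Rightarrow> real^3 \<Rightarrow> real^3^3" where
  "damp_mat h nu = (let u = nu $ 1; v = nu $ 2; r = nu $ 3;
     d11 = - X_u h - X_absu_u h - X_uuu h * u\<^sup>2;
     d22 = - Y_v h - Y_absv_v h * \<bar>v\<bar> - Y_absr_v h * \<bar>r\<bar> - Y_vvv h * v\<^sup>2;
     d23 = - Y_r h - Y_absv_r h * \<bar>v\<bar> - Y_absr_r h * \<bar>r\<bar>;
     d32 = - N_v h - N_absv_v h * \<bar>v\<bar> - N_absr_v h * \<bar>r\<bar>;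
     d33 = - N_r h - N_absv_r h * \<bar>v\<bar> - N_absr_r h * \<bar>r\<bar> - N_rrr h * r\<^sup>2
   in vector [vector [d11, 0, 0], vector [0, d22, d23], vector [0, d32, d33]])"

definition cor_mat :: "real \<Rightarrow> real \<Rightarrow> real \<Rightarrow> real^3 \<Rightarrow> real^3^3" where
  "cor_mat m11 m22 m23 nu = (let u = nu $ 1; v = nu $ 2; r = nu $ 3;
     c13 = - m22 * v - m23 * r; c23 = m11 * u
   in vector [vector [0, 0, c13], vector [0, 0, c23], vector [- c13, - c23, 0]])"

definition obs_gain :: "real^3^3 \<Rightarrow> real \<Rightarrow> real \<Rightarrow> real \<Rightarrow> real^3^3" where
  "obs_gain Minv G1 G2 G3 = (let
     k11 = Minv $ 1 $ 1; k22 = Minv $ 2 $ 2; k23 = Minv $ 2 $ 3;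
     k32 = Minv $ 3 $ 2; k33 = Minv $ 3 $ 3;
     \<sigma> = 1 - k23 * k32 / (k22 * k33)
   in vector [vector [G1 * \<sigma> / k11, 0, 0],
              vector [0, G2 / k22, - G2 * k23 / (k22 * k33)],
              vector [0, - G3 * k32 / (k22 * k33), G3 / k33]])"

end

theory Submission
  imports Defs
begin

theorem mainTheorem2:
  fixes m11 m22 m23 m32 m33 G1 G2 G3 \<theta> :: real
    and h :: hydro
    and nu nu' zeta zeta' tau tau_d tau_d' :: "real \<Rightarrow> real^3"
  defines "M \<equiv> mass_mat m11 m22 m23 m32 m33"
  defines "Minv \<equiv> matrix_inv M"
  defines "\<kappa> \<equiv> (\<lambda>i j. Minv $ i $ j)"
  defines "\<sigma> \<equiv> 1 - \<kappa> 2 3 * \<kappa> 3 2 / (\<kappa> 2 2 * \<kappa> 3 3)"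
  defines "T \<equiv> obs_gain Minv G1 G2 G3"
  defines "D \<equiv> damp_mat h"
  defines "C \<equiv> cor_mat m11 m22 m23"
  defines "lam_min \<equiv> min G1 (min G2 G3)"
  defines "tau_hat \<equiv> (\<lambda>t. zeta t + T *v nu t)"
  defines "z \<equiv> (\<lambda>t. tau_d t - tau_hat t)"
  defines "a \<equiv> 2 * lam_min * \<sigma> - 1"
  defines "r_b \<equiv> \<theta> / sqrt (2 * lam_min * \<sigma> - 1)"
  assumes M_pos: "m11 > 0" "m22 > 0" "m23 > 0" "m32 > 0" "m33 > 0"
    and M_sym: "transpose M = M"
    and M_pd: "\<And>x. x \<noteq> 0 \<Longrightarrow> x \<bullet> (M *v x) > 0"
    and kappa_cond: "\<kappa> 2 3 * \<kappa> 3 2 < \<kappa> 2 2 * \<kappa> 3 3"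
    and G_pos: "G1 > 0" "G2 > 0" "G3 > 0"
    and nu_deriv: "\<And>t. t \<ge> 0 \<Longrightarrow> (nu has_vector_derivative nu' t) (at t within {0..})"
    and dyn: "\<And>t. t \<ge> 0 \<Longrightarrow>
               M *v nu' t + D (nu t) *v nu t + C (nu t) *v nu t = tau t + tau_d t"
    and zeta_deriv: "\<And>t. t \<ge> 0 \<Longrightarrow> (zeta has_vector_derivative zeta' t) (at t within {0..})"
    and observer: "\<And>t. t \<ge> 0 \<Longrightarrow>
               zeta' t = - ((T ** Minv) *v (tau t + tau_hat t - D (nu t) *v nu t - C (nu t) *v nu t))"
    and taud_deriv: "\<And>t. t \<ge> 0 \<Longrightarrow> (tau_d has_vector_derivative tau_d' t) (at t within {0..})"
    and taud_C1: "continuous_on {0..} tau_d'"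
    and taud_bound: "\<And>t. t \<ge> 0 \<Longrightarrow> norm (tau_d' t) \<le> \<theta>"
    and gain_cond: "lam_min * \<sigma> > 1 / 2"
  shows "a > 0 \<and> (\<forall>t\<ge>0. (norm (z t))\<^sup>2 \<le> exp (- a * t) * (norm (z 0))\<^sup>2 + r_b\<^sup>2 * (1 - exp (- a * t)))"
proof -
  have inv: "invertible M"
    unfolding invertible_left_inverse matrix_left_invertible_ker
    using M_pd by (metis inner_zero_right less_irrefl)
  have MMi: "M ** Minv = mat 1" and MiM: "Minv ** M = mat 1"
    using someI_ex[OF inv[unfolded invertible_def]] unfolding Minv_def matrix_inv_def by auto
  have Mij: "M $ i $ j = (if i = 1 \<and> j = 1 then m11 else if i = 2 \<and> j = 2 then m22
      else if i = 2 \<and> j = 3 then m23 else if i = 3 \<and> j = 2 then m32 else if i = 3 \<and> j = 3 then m33 else 0)" for i j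
    unfolding M_def mass_mat_def using exhaust_3[of i] exhaust_3[of j] by auto
  have e1: "(M ** Minv) $ 1 $ j = m11 * Minv $ 1 $ j" for j
    by (simp add: matrix_matrix_mult_def sum_3 Mij)
  have e2: "(Minv ** M) $ i $ 1 = Minv $ i $ 1 * m11" for i
    by (simp add: matrix_matrix_mult_def sum_3 Mij)
  have k12: "Minv $ 1 $ 2 = 0" and k13: "Minv $ 1 $ 3 = 0"
    using e1[of 2] e1[of 3] M_pos by (simp_all add: MMi mat_def)
  have k21: "Minv $ 2 $ 1 = 0" and k31: "Minv $ 3 $ 1 = 0"
    using e2[of 2] e2[of 3] M_pos by (simp_all add: MiM mat_def)
  have kpos: "Minv $ i $ i > 0" for i
  proof -
    define x where "x = Minv *v axis i 1"
    have Mx: "M *v x = axis i 1" unfolding x_def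
      by (simp add: matrix_vector_mul_assoc MMi)
    have "x \<noteq> 0" using Mx by (metis axis_eq_0_iff matrix_vector_mult_0_right zero_neq_one)
    hence "x \<bullet> (M *v x) > 0" by (rule M_pd)
    also have "x \<bullet> (M *v x) = x $ i"
      unfolding Mx by (simp add: inner_axis)
    also have "x $ i = Minv $ i $ i"
      unfolding x_def by (simp add: matrix_vector_mult_def axis_def if_distrib cong: if_cong)
    finally show ?thesis .
  qed
  define P where "P = T ** Minv"
  have k11: "Minv $ 1 $ 1 \<noteq> 0" "Minv $ 2 $ 2 \<noteq> 0" "Minv $ 3 $ 3 \<noteq> 0"
    using kpos by (metis less_irrefl)+
  have Tij: "T $ i $ j = (let
     k11 = Minv $ 1 $ 1; k22 = Minv $ 2 $ 2; k23 = Minv $ 2 $ 3;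
     k32 = Minv $ 3 $ 2; k33 = Minv $ 3 $ 3 in
     if i = 1 \<and> j = 1 then G1 * \<sigma> / k11 else if i = 2 \<and> j = 2 then G2 / k22
      else if i = 2 \<and> j = 3 then - G2 * k23 / (k22 * k33) else if i = 3 \<and> j = 2 then - G3 * k32 / (k22 * k33)
      else if i = 3 \<and> j = 3 then G3 / k33 else 0)" for i j
    unfolding T_def obs_gain_def \<sigma>_def \<kappa>_def Let_def using exhaust_3[of i] exhaust_3[of j] by auto
  have Pv: "P *v x = vector [\<sigma> * G1 * x $ 1, \<sigma> * G2 * x $ 2, \<sigma> * G3 * x $ 3]" for x
  proof -
    have P1: "P $ 1 $ 1 = \<sigma> * G1" "P $ 1 $ 2 = 0" "P $ 1 $ 3 = 0"
      "P $ 2 $ 1 = 0" "P $ 2 $ 2 = \<sigma> * G2" "P $ 2 $ 3 = 0"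
      "P $ 3 $ 1 = 0" "P $ 3 $ 2 = 0" "P $ 3 $ 3 = \<sigma> * G3"
      unfolding P_def using k11 k12 k13 k21 k31
      by (simp_all add: matrix_matrix_mult_def sum_3 Tij Let_def \<sigma>_def \<kappa>_def field_simps)
    show ?thesis
      unfolding vec_eq_iff forall_3 by (simp add: matrix_vector_mult_def sum_3 P1)
  qed
  have lam_pos: "lam_min > 0" using G_pos unfolding lam_min_def by simp
  have sig_pos: "\<sigma> > 0"
  proof (rule ccontr)
    assume "\<not> \<sigma> > 0"
    hence "lam_min * \<sigma> \<le> 0" using lam_pos by (simp add: mult_nonneg_nonpos)
    thus False using gain_cond by simp
  qed
  have a_pos: "a > 0" using gain_cond unfolding a_def by simp
  have th0: "\<theta> \<ge> 0" using taud_bound[of 0] norm_ge_zero by (metis order_refl order.trans)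
  have zder: "(z has_vector_derivative (tau_d' t - P *v z t)) (at t within {0..})" if t: "t \<ge> 0" for t
  proof -
    let ?w = "tau t + tau_d t - D (nu t) *v nu t - C (nu t) *v nu t"
    let ?w2 = "tau t + tau_hat t - D (nu t) *v nu t - C (nu t) *v nu t"
    have nu'eq: "nu' t = Minv *v ?w"
    proof -
      have "M *v nu' t = ?w" using dyn[OF t] by (simp add: algebra_simps)
      hence "Minv *v ?w = Minv *v (M *v nu' t)" by simp
      also have "\<dots> = nu' t" by (simp add: matrix_vector_mul_assoc MiM)
      finally show ?thesis by simp
    qed
    have d1: "(z has_vector_derivative (tau_d' t - (zeta' t + T *v nu' t))) (at t within {0..})"
      unfolding z_def tau_hat_def
      by (intro derivative_intros taud_deriv[OF t] zeta_deriv[OF t]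
          bounded_linear.has_vector_derivative[OF matrix_vector_mul_bounded_linear] nu_deriv[OF t])
    have "tau_d' t - (zeta' t + T *v nu' t) = tau_d' t + (P *v ?w2 - P *v ?w)"
      unfolding observer[OF t] nu'eq P_def matrix_vector_mul_assoc by simp
    also have "P *v ?w2 - P *v ?w = P *v (?w2 - ?w)" by (rule matrix_vector_mult_diff_distrib[symmetric])
    also have "?w2 - ?w = - z t" unfolding z_def by simp
    also have "P *v (- z t) = - (P *v z t)" by (metis diff_0 matrix_vector_mult_0_right matrix_vector_mult_diff_distrib)
    finally have eq: "tau_d' t - (zeta' t + T *v nu' t) = tau_d' t - P *v z t" by simp
    from d1 show ?thesis unfolding eq .
  qed
  define V where "V = (\<lambda>t. z t \<bullet> z t)"
  define d where "d = (\<lambda>t. tau_d' t - P *v z t)"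
  define c where "c = \<theta>\<^sup>2 / a"
  have Vder: "(V has_real_derivative (z t \<bullet> d t + d t \<bullet> z t)) (at t within {0..})" if t: "t \<ge> 0" for t
    unfolding has_real_derivative_iff_has_vector_derivative V_def d_def
    by (rule bounded_bilinear.has_vector_derivative[OF bounded_bilinear_inner zder[OF t] zder[OF t]])
  have Vbound: "z t \<bullet> d t + d t \<bullet> z t \<le> \<theta>\<^sup>2 - a * V t" if t: "t \<ge> 0" for t
  proof -
    have "z t \<bullet> tau_d' t \<le> norm (z t) * \<theta>"
      by (rule order_trans[OF norm_cauchy_schwarz mult_left_mono[OF taud_bound[OF t] norm_ge_zero]])
    moreover have "2 * (norm (z t) * \<theta>) \<le> (norm (z t))\<^sup>2 + \<theta>\<^sup>2"
      using sum_squares_bound[of "norm (z t)" \<theta>] by (simp add: power2_eq_square)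
    moreover have "(norm (z t))\<^sup>2 = V t" unfolding V_def by (simp add: power2_norm_eq_inner)
    moreover have "z t \<bullet> (P *v z t) \<ge> \<sigma> * lam_min * V t"
    proof -
      have g: "lam_min \<le> G1" "lam_min \<le> G2" "lam_min \<le> G3" unfolding lam_min_def by auto
      have "z t \<bullet> (P *v z t) = \<sigma> * (G1 * (z t $ 1)\<^sup>2 + G2 * (z t $ 2)\<^sup>2 + G3 * (z t $ 3)\<^sup>2)"
        unfolding Pv inner_vec_def sum_3 by (simp add: power2_eq_square algebra_simps)
      moreover have "V t = (z t $ 1)\<^sup>2 + (z t $ 2)\<^sup>2 + (z t $ 3)\<^sup>2"
        unfolding V_def inner_vec_def sum_3 by (simp add: power2_eq_square)
      moreover have "lam_min * ((z t $ 1)\<^sup>2 + (z t $ 2)\<^sup>2 + (z t $ 3)\<^sup>2)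
          \<le> G1 * (z t $ 1)\<^sup>2 + G2 * (z t $ 2)\<^sup>2 + G3 * (z t $ 3)\<^sup>2"
        using g by (simp add: distrib_left add_mono mult_right_mono)
      note h = this
      have "\<sigma> * (lam_min * ((z t $ 1)\<^sup>2 + (z t $ 2)\<^sup>2 + (z t $ 3)\<^sup>2))
          \<le> \<sigma> * (G1 * (z t $ 1)\<^sup>2 + G2 * (z t $ 2)\<^sup>2 + G3 * (z t $ 3)\<^sup>2)"
        by (rule mult_left_mono[OF h less_imp_le[OF sig_pos]])
      ultimately show ?thesis by (simp only: mult.assoc)
    qed
    moreover have "z t \<bullet> d t + d t \<bullet> z t = 2 * (z t \<bullet> tau_d' t) - 2 * (z t \<bullet> (P *v z t))"
      unfolding d_def by (simp add: inner_diff_right inner_diff_left inner_commute[of _ "z t"])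
    moreover have "a * V t = 2 * (\<sigma> * lam_min * V t) - V t"
      unfolding a_def by (simp add: algebra_simps)
    ultimately show ?thesis by linarith
  qed
  define W where "W = (\<lambda>t. exp (a * t) * (V t - c))"
  have Wdec: "W t \<le> W 0" if t: "t \<ge> 0" for t
  proof (rule DERIV_nonpos_imp_decreasing_open[OF t])
    fix x assume x: "0 < x" "x < t"
    have atx: "at x within {0..} = at x"
      by (rule at_within_interior) (use x in simp)
    have "(W has_real_derivative (a * exp (a * x) * (V x - c) + exp (a * x) * (z x \<bullet> d x + d x \<bullet> z x))) (at x)"
      unfolding W_def using Vder[of x] x atx
      by (auto intro!: derivative_eq_intros)
    moreover have "a * exp (a * x) * (V x - c) + exp (a * x) * (z x \<bullet> d x + d x \<bullet> z x) \<le> 0"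
    proof -
      have "a * (V x - c) + (z x \<bullet> d x + d x \<bullet> z x) \<le> 0"
        using Vbound[of x] x a_pos unfolding c_def by (simp add: algebra_simps)
      hence "exp (a * x) * (a * (V x - c) + (z x \<bullet> d x + d x \<bullet> z x)) \<le> 0"
        by (simp add: mult_nonneg_nonpos)
      thus ?thesis by (simp add: algebra_simps)
    qed
    ultimately show "\<exists>y. (W has_real_derivative y) (at x) \<and> y \<le> 0" by blast
  next
    have "continuous_on {0..} V"
      unfolding continuous_on_eq_continuous_within
      using Vder DERIV_continuous by blast
    hence "continuous_on {0..} W"
      unfolding W_def by (intro continuous_intros)
    thus "continuous_on {0..t} W" by (rule continuous_on_subset) auto
  qed
  have rb: "r_b\<^sup>2 = c"
    unfolding r_b_def c_def a_def using a_pos unfolding a_def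
    by (simp add: power_divide)
  have nz: "(norm (z t))\<^sup>2 = V t" for t unfolding V_def by (simp add: power2_norm_eq_inner)
  show ?thesis
  proof (intro conjI allI impI)
    show "a > 0" by (rule a_pos)
    fix t :: real assume t: "t \<ge> 0"
    have "exp (a * t) * (V t - c) \<le> V 0 - c" using Wdec[OF t] unfolding W_def by simp
    hence "exp (- a * t) * (exp (a * t) * (V t - c)) \<le> exp (- a * t) * (V 0 - c)"
      by (rule mult_left_mono) simp
    moreover have "exp (- a * t) * (exp (a * t) * (V t - c)) = V t - c"
      by (simp add: mult.assoc[symmetric] exp_add[symmetric])
    ultimately have "V t \<le> exp (- a * t) * V 0 + c * (1 - exp (- a * t))"
      by (simp add: algebra_simps)
    thus "(norm (z t))\<^sup>2 \<le> exp (- a * t) * (norm (z 0))\<^sup>2 + r_b\<^sup>2 * (1 - exp (- a * t))"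
      unfolding nz rb .
  qed
qed

end
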